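(* Let $\phi:\mathbb{R}\to\mathbb{R}$ be a $C^\infty$ function such that $\phi(t)=0$ for $t\le 0$, $\phi(t)=e^{-1/e^{-1/t}}$ for $t\in\,]0,1]$, and $\phi'(t)>0$ for all $t>0$. Fix $0<\lambda<1$ and define $h:\mathbb{R}\to\mathbb{R}$ by $h(t)=t$ for $t\le 0$ and $h(t)=\phi^{-1}(\lambda^3\phi(t))$ for $t>0$, where $\phi^{-1}$ denotes the inverse of the strictly increasing map $\phi$ restricted to $]0,+\infty[$. Then $h$ is of class $C^\infty$ at $0$ (i.e. in a neighbourhood of $0$). *)

theory Defs
  imports "HOL-Analysis.Analysis"
begin

definition smooth_on :: "real set \<Rightarrow> (real \<Rightarrow> real) \<Rightarrow> bool" where
  "smooth_on S f \<longleftrightarrow> (\<forall>n. \<forall>x\<in>S. ((deriv ^^ n) f) differentiable (at x))"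

end

theory Submission
  imports Defs "HOL-Computational_Algebra.Polynomial"
begin

fun CC :: "nat \<Rightarrow> real set \<Rightarrow> (real \<Rightarrow> real) \<Rightarrow> bool" where
  "CC 0 S f = True"
| "CC (Suc n) S f = ((\<forall>x\<in>S. (f has_real_derivative deriv f x) (at x)) \<and> CC n S (deriv f))"

lemma CC_mono: "CC (Suc n) S f \<Longrightarrow> CC n S f"
  by (induction n arbitrary: f) auto

lemma CC_cong:
  assumes "open S" "\<forall>x\<in>S. f x = g x" "CC n S f" shows "CC n S g"
  using assms(2,3)
proof (induction n arbitrary: f g)
  case 0 then show ?case by simp
next
  case (Suc n)
  have d: "(g has_real_derivative deriv f x) (at x)" if "x \<in> S" for x
    using has_field_derivative_transform_within_open[of f "deriv f x" x S g] Suc.prems that assms(1) by auto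
  have e: "\<forall>x\<in>S. deriv f x = deriv g x" using d DERIV_imp_deriv by metis
  show ?case using d e Suc.IH[OF e] Suc.prems by auto
qed

lemma CC_subset: "CC n T f \<Longrightarrow> S \<subseteq> T \<Longrightarrow> CC n S f"
  by (induction n arbitrary: f) auto

lemma CC_SucI:
  assumes "open S" "\<And>x. x \<in> S \<Longrightarrow> (f has_real_derivative f' x) (at x)" "CC n S f'"
  shows "CC (Suc n) S f"
proof -
  have e: "\<forall>x\<in>S. f' x = deriv f x"
  proof
    fix x assume "x \<in> S"
    show "f' x = deriv f x" using DERIV_imp_deriv[OF assms(2)[OF \<open>x \<in> S\<close>]] by simp
  qed
  have c: "CC n S (deriv f)" by (rule CC_cong[OF assms(1) e assms(3)])
  have d: "\<forall>x\<in>S. (f has_real_derivative deriv f x) (at x)"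
  proof
    fix x assume x: "x \<in> S"
    have "deriv f x = f' x" using e x by simp
    then show "(f has_real_derivative deriv f x) (at x)" using assms(2)[OF x] by simp
  qed
  show ?thesis using c d by simp
qed

lemma CC_const: "CC n S (\<lambda>x. c)"
proof (induction n arbitrary: c)
  case (Suc n)
  have "deriv (\<lambda>x. c) = (\<lambda>x::real. 0::real)" by (intro ext DERIV_imp_deriv) auto
  then show ?case using Suc by auto
qed simp

lemma CC_id: "CC n S (\<lambda>x. x)"
proof (cases n)
  case (Suc m)
  have "deriv (\<lambda>x. x) = (\<lambda>x::real. 1::real)" by (intro ext DERIV_imp_deriv) auto
  then show ?thesis using Suc CC_const by auto
qed simp

lemma CC_add: assumes "open S" shows "CC n S f \<Longrightarrow> CC n S g \<Longrightarrow> CC n S (\<lambda>x. f x + g x)"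
proof (induction n arbitrary: f g)
  case (Suc n)
  have d: "((\<lambda>x. f x + g x) has_real_derivative deriv f x + deriv g x) (at x)" if "x \<in> S" for x
    using Suc.prems that by (auto intro!: derivative_eq_intros)
  have f1: "CC n S (deriv f)" using Suc.prems(1) by simp
  have g1: "CC n S (deriv g)" using Suc.prems(2) by simp
  show ?case by (rule CC_SucI[where f'="\<lambda>x. deriv f x + deriv g x", OF assms d Suc.IH[OF f1 g1]])
qed simp

lemma CC_mult: assumes "open S" shows "CC n S f \<Longrightarrow> CC n S g \<Longrightarrow> CC n S (\<lambda>x. f x * g x)"
proof (induction n arbitrary: f g)
  case (Suc n)
  have d: "((\<lambda>x. f x * g x) has_real_derivative deriv f x * g x + f x * deriv g x) (at x)" if "x \<in> S" for x
    using Suc.prems that by (auto intro!: derivative_eq_intros)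
  have f1: "CC n S f" "CC n S (deriv f)" using CC_mono[OF Suc.prems(1)] Suc.prems(1) by auto
  have g1: "CC n S g" "CC n S (deriv g)" using CC_mono[OF Suc.prems(2)] Suc.prems(2) by auto
  have "CC n S (\<lambda>x. deriv f x * g x + f x * deriv g x)"
    by (rule CC_add[OF assms Suc.IH[OF f1(2) g1(1)] Suc.IH[OF f1(1) g1(2)]])
  note cc = this
  show ?case by (rule CC_SucI[where f'="\<lambda>x. deriv f x * g x + f x * deriv g x", OF assms d cc])
qed simp

lemma CC_comp:
  assumes "open S" shows "CC n T f \<Longrightarrow> CC n S g \<Longrightarrow> \<forall>x\<in>S. g x \<in> T \<Longrightarrow> CC n S (\<lambda>x. f (g x))"
proof (induction n arbitrary: f g)
  case (Suc n)
  have d: "((\<lambda>x. f (g x)) has_real_derivative deriv f (g x) * deriv g x) (at x)" if "x \<in> S" for x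
    using Suc.prems that by (intro DERIV_chain2) auto
  have f1: "CC n T (deriv f)" using Suc.prems(1) by auto
  have g1: "CC n S g" "CC n S (deriv g)" using CC_mono[OF Suc.prems(2)] Suc.prems(2) by auto
  have "CC n S (\<lambda>x. deriv f (g x) * deriv g x)"
    by (rule CC_mult[OF assms Suc.IH[OF f1 g1(1) Suc.prems(3)] g1(2)])
  note cc = this
  show ?case by (rule CC_SucI[where f'="\<lambda>x. deriv f (g x) * deriv g x", OF assms d cc])
qed simp

lemma CC_inverse: "CC n {0<..} inverse"
proof (induction n)
  case (Suc n)
  have d: "(inverse has_real_derivative - (inverse x * inverse x)) (at x)" if "x \<in> {0<..}" for x
    using that by (auto intro!: derivative_eq_intros simp: power2_eq_square)
  have "CC n {0<..} (\<lambda>x. (-1) * (inverse x * inverse x))"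
    by (rule CC_mult[OF _ CC_const CC_mult[OF _ Suc.IH Suc.IH]]) auto
  hence "CC n {0<..} (\<lambda>x. - (inverse x * inverse x))" by simp
  note cc = this
  show ?case by (rule CC_SucI[where f'="\<lambda>x. - (inverse x * inverse x)", OF _ d cc]) auto
qed simp

lemma CC_ln: "CC n {0<..} ln"
proof (cases n)
  case (Suc m)
  have d: "(ln has_real_derivative inverse x) (at x)" if "x \<in> {0<..}" for x
    using that by (auto intro!: derivative_eq_intros simp: inverse_eq_divide)
  show ?thesis unfolding Suc by (rule CC_SucI[OF _ d CC_inverse]) auto
qed simp

lemma CC_deriv: "CC (m + n) S f \<Longrightarrow> CC m S ((deriv ^^ n) f)"
  by (induction n arbitrary: f) (auto simp: funpow_Suc_right simp del: funpow.simps)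

lemma CC_smooth: assumes "\<forall>n. CC n S f" shows "smooth_on S f"
  unfolding smooth_on_def
proof (intro allI ballI)
  fix n x assume "x \<in> S"
  have "CC 1 S ((deriv ^^ n) f)" using assms CC_deriv[of 1 n S f] by auto
  then show "(deriv ^^ n) f differentiable at x" using \<open>x \<in> S\<close>
    by (auto simp: real_differentiable_def)
qed


definition Qf :: "real poly \<Rightarrow> real \<Rightarrow> real" where
  "Qf P t = (if t \<le> 0 then 0 else poly P (1/t) * exp (-1/t))"

definition Pd :: "real poly \<Rightarrow> real poly" where
  "Pd P = [:0,0,1:] * (P - pderiv P)"

lemma poly_exp_lim: "((\<lambda>u. poly Q u * exp (-u)) \<longlongrightarrow> (0::real)) at_top"
proof -
  have eq: "poly Q u * exp (-u) = (\<Sum>i\<le>degree Q. coeff Q i * (u ^ i / exp u))" for u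
    by (simp add: poly_altdef sum_distrib_right exp_minus divide_inverse mult.assoc)
  show ?thesis unfolding eq
    by (intro tendsto_null_sum tendsto_mult_right_zero tendsto_power_div_exp_0)
qed

lemma Qf_pos_deriv:
  assumes "x > 0"
  shows "((\<lambda>t. poly P (1/t) * exp (-1/t)) has_real_derivative poly (Pd P) (1/x) * exp (-1/x)) (at x)"
proof -
  have "((\<lambda>t. poly P (1/t) * exp (-1/t)) has_real_derivative
      (poly (pderiv P) (1/x) * (- inverse (x * x))) * exp (-1/x) + poly P (1/x) * (exp (-1/x) * inverse (x*x))) (at x)"
    using assms
    by (auto intro!: derivative_eq_intros DERIV_chain2[OF poly_DERIV] simp: divide_inverse)
  moreover have "(poly (pderiv P) (1/x) * (- inverse (x * x))) * exp (-1/x) + poly P (1/x) * (exp (-1/x) * inverse (x*x))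
     = poly (Pd P) (1/x) * exp (-1/x)"
    by (simp add: Pd_def poly_pCons algebra_simps divide_inverse power2_eq_square)
  ultimately show ?thesis by simp
qed

lemma Qf_deriv: "(Qf P has_real_derivative Qf (Pd P) x) (at x)"
proof (cases "x > 0")
  case True
  have "(Qf P has_real_derivative poly (Pd P) (1/x) * exp (-1/x)) (at x)"
    by (rule has_field_derivative_transform_within_open[OF Qf_pos_deriv[OF True], of "{0<..}"])
       (use True in \<open>auto simp: Qf_def\<close>)
  then show ?thesis using True by (simp add: Qf_def)
next
  case F: False
  show ?thesis
  proof (cases "x < 0")
    case True
    have "((\<lambda>t. 0) has_real_derivative 0) (at x)" by simp
    then have "(Qf P has_real_derivative 0) (at x)"
      by (rule has_field_derivative_transform_within_open[of _ _ _ "{..<0}"])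
         (use True in \<open>auto simp: Qf_def\<close>)
    then show ?thesis using True by (simp add: Qf_def)
  next
    case False
    then have x0: "x = 0" using F by simp
    have "((\<lambda>y. (Qf P y - Qf P 0) / (y - 0)) \<longlongrightarrow> 0) (at 0)"
    proof (rule filterlim_split_at)
      show "((\<lambda>y. (Qf P y - Qf P 0) / (y - 0)) \<longlongrightarrow> 0) (at_left 0)"
      proof (rule Lim_transform_eventually[OF tendsto_const])
        show "\<forall>\<^sub>F y in at_left 0. 0 = (Qf P y - Qf P 0) / (y - 0)"
          by (auto simp: eventually_at_left_field Qf_def intro!: exI[of _ "-1"])
      qed
      have l: "((\<lambda>y. poly (pCons 0 P) (inverse y) * exp (- inverse y)) \<longlongrightarrow> 0) (at_right 0)"
        using filterlim_compose[OF poly_exp_lim[of "pCons 0 P"] filterlim_inverse_at_top_right] by simp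
      show "((\<lambda>y. (Qf P y - Qf P 0) / (y - 0)) \<longlongrightarrow> 0) (at_right 0)"
      proof (rule Lim_transform_eventually[OF l])
        show "\<forall>\<^sub>F y in at_right 0. poly (pCons 0 P) (inverse y) * exp (- inverse y) = (Qf P y - Qf P 0) / (y - 0)"
          by (auto simp: eventually_at_right_field Qf_def divide_inverse intro!: exI[of _ 1])
      qed
    qed
    then have "(Qf P has_real_derivative 0) (at 0)" by (simp add: has_field_derivative_iff)
    then show ?thesis using x0 by (simp add: Qf_def)
  qed
qed


lemma CC_Q: "CC n UNIV (Qf P)"
proof (induction n arbitrary: P)
  case (Suc n)
  have "deriv (Qf P) = Qf (Pd P)" by (intro ext DERIV_imp_deriv Qf_deriv)
  then show ?case using Suc Qf_deriv by simp
qed simp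

lemma Qf1: "Qf 1 t = (if t \<le> 0 then 0 else exp (-1/t))"
  by (simp add: Qf_def)

theorem mainTheorem3:
  fixes \<phi> h :: "real \<Rightarrow> real" and lam :: real
  assumes smooth: "smooth_on UNIV \<phi>"
    and neg: "\<forall>t\<le>0. \<phi> t = 0"
    and unit: "\<forall>t. 0 < t \<and> t \<le> 1 \<longrightarrow> \<phi> t = exp (- 1 / exp (- 1 / t))"
    and pos: "\<forall>t>0. deriv \<phi> t > 0"
    and lam: "0 < lam" "lam < 1"
    and h_def: "\<forall>t. h t = (if t \<le> 0 then t
                          else the_inv_into {0<..} \<phi> (lam ^ 3 * \<phi> t))"
  shows "\<exists>S. open S \<and> 0 \<in> S \<and> smooth_on S h"
proof -
  define c where "c = - ln (lam ^ 3)"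
  have l3: "0 < lam ^ 3" "lam ^ 3 < 1" using lam by (auto simp: power_less_one_iff)
  have c0: "c > 0" unfolding c_def using l3 by simp
  have expc: "exp (- c) = lam ^ 3" unfolding c_def using l3 by simp
  define g where "g = Qf 1"
  have g0: "g t \<ge> 0" for t unfolding g_def Qf1 by simp
  define L where "L t = ln (1 + c * g t)" for t
  define H where "H t = t * inverse (1 + t * L t)" for t
  have A: "1 + c * g t > 0" for t using c0 g0[of t] by (smt (verit) mult_nonneg_nonneg)
  have tL: "t * L t \<ge> 0" for t
  proof (cases "t \<le> 0")
    case True then show ?thesis by (simp add: L_def g_def Qf1)
  next
    case False
    have "L t \<ge> 0" unfolding L_def using c0 g0[of t] by (simp)
    then show ?thesis using False by simp
  qed
  have D: "1 + t * L t > 0" for t using tL[of t] by linarith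
  have CCH: "CC n UNIV H" for n
  proof -
    have a: "CC n UNIV (\<lambda>t. 1 + c * g t)"
      unfolding g_def by (intro CC_add CC_mult CC_const CC_Q) auto
    have b: "CC n UNIV L"
      unfolding L_def[abs_def] using CC_comp[OF open_UNIV CC_ln a] A by auto
    have d: "CC n UNIV (\<lambda>t. 1 + t * L t)"
      by (intro CC_add CC_mult CC_const CC_id b) auto
    have e: "CC n UNIV (\<lambda>t. inverse (1 + t * L t))"
      using CC_comp[OF open_UNIV CC_inverse d] D by auto
    show ?thesis unfolding H_def[abs_def] by (intro CC_mult CC_id e) auto
  qed
  have dphi: "(\<phi> has_real_derivative deriv \<phi> x) (at x)" for x
  proof -
    have "\<forall>n. \<forall>x\<in>UNIV. ((deriv ^^ n) \<phi>) differentiable (at x)" using smooth by (simp add: smooth_on_def)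
    then have "((deriv ^^ 0) \<phi>) differentiable (at x)" by blast
    then have "\<phi> differentiable at x" by simp
    then show ?thesis by (simp add: DERIV_deriv_iff_real_differentiable)
  qed
  have mono: "\<phi> a < \<phi> b" if "0 < a" "a < b" for a b
  proof (rule DERIV_pos_imp_increasing[OF that(2)])
    fix x assume "a \<le> x" "x \<le> b"
    then have "x > 0" using that by simp
    then show "\<exists>y. DERIV \<phi> x :> y \<and> y > 0" using dphi pos by blast
  qed
  have inj: "inj_on \<phi> {0<..}"
  proof (rule inj_onI)
    fix a b assume "a \<in> {0<..}" "b \<in> {0<..}" "\<phi> a = \<phi> b"
    then show "a = b" using mono[of a b] mono[of b a] by (cases a b rule: linorder_cases) auto
  qed
  have eq: "H x = h x" if "x < 1" for x
  proof (cases "x \<le> 0")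
    case True then show ?thesis using h_def by (simp add: H_def L_def g_def Qf1)
  next
    case False
    hence x0: "x > 0" by simp
    define E where "E = exp (-1/x)"
    have E0: "E > 0" unfolding E_def by simp
    have gx: "g x = E" using x0 by (simp add: g_def Qf1 E_def)
    have Lx: "L x = ln (1 + c * E)" by (simp add: L_def gx)
    have cE: "1 + c * E > 0" using c0 E0 by (smt (verit) mult_pos_pos)
    have Hpos: "H x > 0" unfolding H_def using x0 D[of x] by simp
    have Hle: "H x \<le> x" unfolding H_def using x0 D[of x] tL[of x]
      by (simp add: divide_inverse[symmetric] divide_le_eq)
    have i1: "-1 / H x = -1/x - L x" unfolding H_def using x0 D[of x]
      by (simp add: field_simps)
    have i2: "exp (-1 / H x) = E / (1 + c * E)"
      unfolding i1 Lx E_def using cE[unfolded E_def] by (simp add: exp_diff)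
    have i3: "-1 / exp (-1 / H x) = -1/E - c" unfolding i2 using E0 by (simp add: field_simps)
    have "\<phi> (H x) = exp (-1 / exp (-1 / H x))" using unit Hpos Hle that by auto
    also have "\<dots> = exp (-1/E) * exp (-c)" unfolding i3 by (simp add: exp_diff exp_minus divide_inverse)
    also have "\<dots> = lam ^ 3 * \<phi> x" using unit x0 that expc by (simp add: E_def)
    finally have fin: "\<phi> (H x) = lam ^ 3 * \<phi> x" .
    have "the_inv_into {0<..} \<phi> (lam ^ 3 * \<phi> x) = H x"
      using the_inv_into_f_eq[OF inj fin] Hpos by simp
    then show ?thesis using h_def False by simp
  qed
  have "CC n {..<1} h" for n
    using CC_cong[OF _ _ CC_subset[OF CCH]] eq by auto
  then have "smooth_on {..<1} h" by (intro CC_smooth) auto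
  then show ?thesis by (intro exI[of _ "{..<1::real}"]) auto
qed

end
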